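(* Let $T$ be a tree in which every nontrivial pseudo-supremum is a supremum. Then $T$ is monotonically normal in each of the coarse wedge topology, the fine wedge topology, and the chevron topology.
   Context: A tree is a partially ordered set in which the set of predecessors of each element is well-ordered. Levels: $T(0)$ is the set of minimal elements; $T(\alpha)$ is the set of minimal elements of $T\setminus\bigcup_{\beta<\alpha}T(\beta)$; successor levels are $T(\alpha+1)$. For a nonempty chain $C$ bounded above, its pseudo-supremum is the set of minimal upper bounds of $C$; the standing assumption is that each such set is a singleton. For $t\in T$, $V_t=\{s:s\ge t\}$. Fine wedge topology: subbase all $V_t$ and $T\setminus V_t$. Coarse wedge topology: subbase all $V_t$ and $T\setminus V_t$ with $t$ minimal or on a successor level. Chevron topology: base consisting of all $\{m\}$ with $m$ minimal, together with all sets $C[s,t]=(V_s\setminus V_t)\cup\{t\}$ where $s\le t$ and $s$ is minimal or on a successor level. *)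

theory Defs
  imports "HOL-Analysis.Analysis"
begin

definition is_tree :: "'a::order set \<Rightarrow> bool" where
  "is_tree T \<longleftrightarrow> (\<forall>t\<in>T. \<forall>A. A \<subseteq> {s\<in>T. s < t} \<and> A \<noteq> {} \<longrightarrow> (\<exists>m\<in>A. \<forall>a\<in>A. m \<le> a))"

definition is_chain :: "'a::order set \<Rightarrow> 'a set \<Rightarrow> bool" where
  "is_chain T C \<longleftrightarrow> C \<subseteq> T \<and> (\<forall>x\<in>C. \<forall>y\<in>C. x \<le> y \<or> y \<le> x)"

definition upper_bounds :: "'a::order set \<Rightarrow> 'a set \<Rightarrow> 'a set" where
  "upper_bounds T C = {u\<in>T. \<forall>c\<in>C. c \<le> u}"

definition pseudo_sup :: "'a::order set \<Rightarrow> 'a set \<Rightarrow> 'a set" where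
  "pseudo_sup T C = {u\<in>upper_bounds T C. \<forall>v\<in>upper_bounds T C. v \<le> u \<longrightarrow> v = u}"

definition is_supremum :: "'a::order set \<Rightarrow> 'a set \<Rightarrow> 'a \<Rightarrow> bool" where
  "is_supremum T C t \<longleftrightarrow> t \<in> upper_bounds T C \<and> (\<forall>u\<in>upper_bounds T C. t \<le> u)"

definition nontrivial_chain :: "'a::order set \<Rightarrow> 'a set \<Rightarrow> bool" where
  "nontrivial_chain T C \<longleftrightarrow> is_chain T C \<and> C \<noteq> {} \<and> upper_bounds T C \<noteq> {}
      \<and> \<not> (\<exists>m\<in>C. \<forall>c\<in>C. c \<le> m)"

definition cone :: "'a::order set \<Rightarrow> 'a \<Rightarrow> 'a set" where
  "cone T t = {s\<in>T. t \<le> s}"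

definition minimal_in :: "'a::order set \<Rightarrow> 'a \<Rightarrow> bool" where
  "minimal_in T t \<longleftrightarrow> t \<in> T \<and> \<not> (\<exists>s\<in>T. s < t)"

definition succ_level :: "'a::order set \<Rightarrow> 'a \<Rightarrow> bool" where
  "succ_level T t \<longleftrightarrow> t \<in> T \<and> (\<exists>m\<in>T. m < t \<and> (\<forall>s\<in>T. s < t \<longrightarrow> s \<le> m))"

definition fine_wedge :: "'a::order set \<Rightarrow> 'a topology" where
  "fine_wedge T = topology_generated_by
     ((\<lambda>t. cone T t) ` T \<union> (\<lambda>t. T - cone T t) ` T)"

definition coarse_wedge :: "'a::order set \<Rightarrow> 'a topology" where
  "coarse_wedge T = topology_generated_by
     ((\<lambda>t. cone T t) ` {t. minimal_in T t \<or> succ_level T t} \<union>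
      (\<lambda>t. T - cone T t) ` {t. minimal_in T t \<or> succ_level T t})"

definition chev :: "'a::order set \<Rightarrow> 'a \<Rightarrow> 'a \<Rightarrow> 'a set" where
  "chev T s t = (cone T s - cone T t) \<union> {t}"

definition chevron_top :: "'a::order set \<Rightarrow> 'a topology" where
  "chevron_top T = topology_generated_by
     ((\<lambda>m. {m}) ` {m. minimal_in T m} \<union>
      {chev T s t | s t. s \<in> T \<and> t \<in> T \<and> s \<le> t \<and> (minimal_in T s \<or> succ_level T s)})"

definition monotonically_normal :: "'a topology \<Rightarrow> bool" where
  "monotonically_normal X \<longleftrightarrow> t1_space X \<and>
     (\<exists>G::'a \<Rightarrow> 'a set \<Rightarrow> 'a set.
        (\<forall>x U. openin X U \<and> x \<in> U \<longrightarrow> openin X (G x U) \<and> x \<in> G x U \<and> G x U \<subseteq> U) \<and>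
        (\<forall>x y U V. openin X U \<and> x \<in> U \<and> openin X V \<and> y \<in> V \<and> G x U \<inter> G y V \<noteq> {}
             \<longrightarrow> x \<in> V \<or> y \<in> U))"

end

theory Submission imports Defs begin

definition ms :: "'a::order set \<Rightarrow> 'a \<Rightarrow> bool" where
  "ms T t \<longleftrightarrow> minimal_in T t \<or> succ_level T t"

definition isucc :: "'a::order set \<Rightarrow> 'a \<Rightarrow> 'a \<Rightarrow> bool" where
  "isucc T x c \<longleftrightarrow> c \<in> T \<and> x < c \<and> (\<forall>w\<in>T. x < w \<longrightarrow> \<not> w < c)"

definition ups :: "'a::order set \<Rightarrow> 'a \<Rightarrow> 'a set \<Rightarrow> 'a set" where
  "ups T x U = \<Union>{cone T c | c. isucc T x c \<and> cone T c \<subseteq> U}"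

definition bad :: "'a::order set \<Rightarrow> 'a \<Rightarrow> 'a set \<Rightarrow> 'a set" where
  "bad T x U = {c. isucc T x c \<and> \<not> cone T c \<subseteq> U}"

locale treeloc =
  fixes T :: "'a::order set"
  assumes tree: "is_tree T"
begin

lemma least:
  assumes "x \<in> T" "A \<subseteq> {v\<in>T. v \<le> x}" "A \<noteq> {}"
  shows "\<exists>m\<in>A. \<forall>a\<in>A. m \<le> a"
proof (cases "A - {x} = {}")
  case True
  then have "A = {x}" using assms by auto
  then show ?thesis by auto
next
  case False
  have "A - {x} \<subseteq> {s\<in>T. s < x}" using assms(2) by auto
  with tree assms(1) False obtain m where m: "m \<in> A - {x}" "\<forall>a\<in>A - {x}. m \<le> a"
    unfolding is_tree_def by blast
  have "m \<le> x" using m assms(2) by auto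
  then show ?thesis using m by (metis Diff_iff singletonD)
qed

lemma comp:
  assumes "z \<in> T" "a \<in> T" "b \<in> T" "a \<le> z" "b \<le> z"
  shows "a \<le> b \<or> b \<le> a"
proof -
  obtain m where "m \<in> {a,b}" "\<forall>c\<in>{a,b}. m \<le> c"
    using least[of z "{a,b}"] assms by auto
  then show ?thesis by auto
qed

lemma root:
  assumes "x \<in> T" shows "\<exists>r\<in>T. r \<le> x \<and> minimal_in T r"
proof -
  obtain r where r: "r \<in> {v\<in>T. v \<le> x}" "\<forall>a\<in>{v\<in>T. v \<le> x}. r \<le> a"
    using least[of x "{v\<in>T. v \<le> x}"] assms by auto
  have "minimal_in T r" unfolding minimal_in_def
  proof (intro conjI notI)
    show "r \<in> T" using r by auto
    assume "\<exists>s\<in>T. s < r"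
    then obtain s where "s \<in> T" "s < r" by auto
    then have "s \<le> x" using r by auto
    then have "r \<le> s" using r \<open>s \<in> T\<close> by auto
    then show False using \<open>s < r\<close> by auto
  qed
  then show ?thesis using r by auto
qed

lemma isucc_ex:
  assumes "x \<in> T" "w \<in> T" "x < w" shows "\<exists>c. isucc T x c \<and> c \<le> w"
proof -
  obtain c where c: "c \<in> {v\<in>T. x < v \<and> v \<le> w}" "\<forall>a\<in>{v\<in>T. x < v \<and> v \<le> w}. c \<le> a"
    using least[of w "{v\<in>T. x < v \<and> v \<le> w}"] assms by auto
  have "isucc T x c" unfolding isucc_def
  proof (intro conjI ballI impI notI)
    show "c \<in> T" "x < c" using c by auto
    fix u assume "u \<in> T" "x < u" "u < c"
    then have "u \<le> w" using c by auto
    then have "c \<le> u" using c \<open>u \<in> T\<close> \<open>x < u\<close> by auto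
    then show False using \<open>u < c\<close> by auto
  qed
  then show ?thesis using c by auto
qed

lemma isucc_succ:
  assumes "x \<in> T" "isucc T x c" shows "succ_level T c"
  unfolding succ_level_def
proof (intro conjI bexI[of _ x] ballI impI)
  show "c \<in> T" "x < c" using assms unfolding isucc_def by auto
  fix s assume "s \<in> T" "s < c"
  then have "s \<le> x \<or> x \<le> s" using comp[of c s x] assms unfolding isucc_def by auto
  moreover have "\<not> x < s" using assms \<open>s \<in> T\<close> \<open>s < c\<close> unfolding isucc_def by auto
  ultimately show "s \<le> x" by (auto simp: order.order_iff_strict)
qed (use assms in auto)

lemma isucc_uniq:
  assumes "isucc T x c1" "isucc T x c2" "c1 \<le> w" "c2 \<le> w" "w \<in> T"
  shows "c1 = c2"
proof -
  have "c1 \<le> c2 \<or> c2 \<le> c1" using comp[of w c1 c2] assms unfolding isucc_def by auto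
  then show ?thesis using assms unfolding isucc_def by (auto simp: order.order_iff_strict)
qed

end

locale stree = treeloc +
  assumes standing: "\<And>C. is_chain T C \<Longrightarrow> C \<noteq> {} \<Longrightarrow> upper_bounds T C \<noteq> {} \<Longrightarrow>
                     \<exists>t. pseudo_sup T C = {t}"
    and psup: "\<And>C t. nontrivial_chain T C \<Longrightarrow> t \<in> pseudo_sup T C \<Longrightarrow> is_supremum T C t"
begin

lemma sepr:
  assumes "x \<in> T" "t \<in> T" "\<not> x \<le> t"
  shows "\<exists>r\<in>T. r \<le> x \<and> \<not> r \<le> t \<and> ms T r"
proof -
  obtain r where r: "r \<in> {v\<in>T. v \<le> x \<and> \<not> v \<le> t}" "\<forall>a\<in>{v\<in>T. v \<le> x \<and> \<not> v \<le> t}. r \<le> a"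
    using least[of x "{v\<in>T. v \<le> x \<and> \<not> v \<le> t}"] assms by auto
  have below: "v \<le> t" if "v \<in> T" "v < r" for v
    proof (rule ccontr)
    assume "\<not> v \<le> t"
    moreover have "v \<le> x" using that r by auto
    ultimately have "r \<le> v" using r that by auto
    then show False using that by auto
  qed
  have "ms T r"
  proof (rule ccontr)
    assume nms: "\<not> ms T r"
    define C where "C = {s\<in>T. s < r}"
    have rT: "r \<in> T" using r by auto
    have ne: "C \<noteq> {}" using nms rT unfolding ms_def minimal_in_def C_def by auto
    have ch: "is_chain T C" unfolding is_chain_def C_def
    proof (intro conjI ballI)
      fix a b assume "a \<in> {s \<in> T. s < r}" "b \<in> {s \<in> T. s < r}"
      then show "a \<le> b \<or> b \<le> a" using comp[of r a b] rT by auto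
    qed auto
    have rub: "r \<in> upper_bounds T C" unfolding upper_bounds_def C_def using rT by auto
    have nomax: "\<not> (\<exists>m\<in>C. \<forall>c\<in>C. c \<le> m)"
    proof
      assume "\<exists>m\<in>C. \<forall>c\<in>C. c \<le> m"
      then have "succ_level T r" unfolding succ_level_def C_def using rT by auto
      then show False using nms unfolding ms_def by auto
    qed
    have nt: "nontrivial_chain T C" unfolding nontrivial_chain_def using ch ne rub nomax by auto
    obtain p where p: "pseudo_sup T C = {p}" using standing[OF ch ne] rub by auto
    have sup: "is_supremum T C p" using psup[OF nt] p by auto
    have tub: "t \<in> upper_bounds T C" unfolding upper_bounds_def C_def using assms(2) below by auto
    have "p \<le> t" "p \<le> r" "p \<in> upper_bounds T C" using sup tub rub unfolding is_supremum_def by auto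
    show False
    proof (cases "p = r")
      case True then show ?thesis using \<open>p \<le> t\<close> r by auto
    next
      case False
      then have "p \<in> C" using \<open>p \<le> r\<close> \<open>p \<in> upper_bounds T C\<close> unfolding C_def upper_bounds_def by auto
      then show ?thesis using nomax \<open>p \<in> upper_bounds T C\<close> unfolding upper_bounds_def by auto
    qed
  qed
  then show ?thesis using r by auto
qed


definition QA where "QA U \<longleftrightarrow> (\<forall>x\<in>U. \<exists>a\<in>T. a \<le> x \<and> ms T a \<and> chev T a x \<subseteq> U)"
definition QB where "QB U \<longleftrightarrow> (\<forall>x\<in>U. finite (bad T x U))"

lemma QA_Int: "QA A \<Longrightarrow> QA B \<Longrightarrow> A \<subseteq> T \<Longrightarrow> QA (A \<inter> B)"
  unfolding QA_def
proof (intro ballI)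
  fix x assume a: "\<forall>x\<in>A. \<exists>a\<in>T. a \<le> x \<and> ms T a \<and> chev T a x \<subseteq> A"
    "\<forall>x\<in>B. \<exists>a\<in>T. a \<le> x \<and> ms T a \<and> chev T a x \<subseteq> B" "A \<subseteq> T" "x \<in> A \<inter> B"
  then obtain a1 a2 where a12: "a1 \<in> T" "a1 \<le> x" "ms T a1" "chev T a1 x \<subseteq> A"
     "a2 \<in> T" "a2 \<le> x" "ms T a2" "chev T a2 x \<subseteq> B" by blast
  have xT: "x \<in> T" using a by auto
  have mono: "chev T b x \<subseteq> chev T a x" if "a \<le> b" for a b
    using that unfolding chev_def cone_def by auto
  show "\<exists>a\<in>T. a \<le> x \<and> ms T a \<and> chev T a x \<subseteq> A \<inter> B"
  proof (cases "a1 \<le> a2")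
    case True
    have "chev T a2 x \<subseteq> A" by (rule subset_trans[OF mono[OF True] a12(4)])
    then show ?thesis using a12(5-8) by blast
  next
    case False
    then have "a2 \<le> a1" using comp[OF xT a12(1) a12(5) a12(2) a12(6)] by auto
    have "a2 \<le> a1" by fact
    have "chev T a1 x \<subseteq> B" by (rule subset_trans[OF mono[OF \<open>a2 \<le> a1\<close>] a12(8)])
    then show ?thesis using a12(1-4) by blast
  qed
qed

lemma QA_Un: "(\<forall>k\<in>K. QA k) \<Longrightarrow> QA (\<Union>K)"
  unfolding QA_def
proof
  fix x assume a: "\<forall>k\<in>K. \<forall>x\<in>k. \<exists>a\<in>T. a \<le> x \<and> ms T a \<and> chev T a x \<subseteq> k" "x \<in> \<Union>K"
  then obtain k where k: "k \<in> K" "x \<in> k" by auto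
  have "\<exists>a\<in>T. a \<le> x \<and> ms T a \<and> chev T a x \<subseteq> k" using a(1) k by blast
  then obtain a where "a \<in> T" "a \<le> x" "ms T a" "chev T a x \<subseteq> k" by blast
  then show "\<exists>a\<in>T. a \<le> x \<and> ms T a \<and> chev T a x \<subseteq> \<Union>K" using k by blast
qed

lemma QB_Int: "QB A \<Longrightarrow> QB B \<Longrightarrow> QB (A \<inter> B)"
  unfolding QB_def
proof (intro ballI)
  fix x assume "\<forall>x\<in>A. finite (bad T x A)" "\<forall>x\<in>B. finite (bad T x B)" "x \<in> A \<inter> B"
  then have "finite (bad T x A \<union> bad T x B)" by auto
  moreover have "bad T x (A \<inter> B) \<subseteq> bad T x A \<union> bad T x B" unfolding bad_def by auto
  ultimately show "finite (bad T x (A \<inter> B))" by (rule finite_subset[rotated])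
qed

lemma QB_Un: "(\<forall>k\<in>K. QB k) \<Longrightarrow> QB (\<Union>K)"
  unfolding QB_def
proof (intro ballI)
  fix x assume a: "\<forall>k\<in>K. \<forall>x\<in>k. finite (bad T x k)" "x \<in> \<Union>K"
  then obtain k where k: "k \<in> K" "x \<in> k" by auto
  have "bad T x (\<Union>K) \<subseteq> bad T x k" unfolding bad_def using k by auto
  moreover have "finite (bad T x k)" using a k by auto
  ultimately show "finite (bad T x (\<Union>K))" by (rule finite_subset)
qed

lemma gen_ind:
  assumes "generate_topology_on S U" "P {}" "\<And>a b. P a \<Longrightarrow> P b \<Longrightarrow> P (a \<inter> b)"
    "\<And>K. (\<forall>k\<in>K. P k) \<Longrightarrow> P (\<Union>K)" "\<And>s. s \<in> S \<Longrightarrow> P s"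
  shows "P U"
  using assms(1)
proof induction
  case Empty then show ?case using assms(2) .
next
  case (Int a b) then show ?case using assms(3) by simp
next
  case (UN K) then show ?case using assms(4) by simp
next
  case (Basis s) then show ?case using assms(5) by simp
qed

lemma QA_cone: "ms T t \<Longrightarrow> QA (cone T t)"
  unfolding QA_def
proof
  fix x assume "ms T t" "x \<in> cone T t"
  moreover have "t \<in> T" using \<open>ms T t\<close> unfolding ms_def minimal_in_def succ_level_def by auto
  ultimately show "\<exists>a\<in>T. a \<le> x \<and> ms T a \<and> chev T a x \<subseteq> cone T t"
    by (intro bexI[of _ t]) (auto simp: cone_def chev_def)
qed

lemma QA_compl: "t \<in> T \<Longrightarrow> QA (T - cone T t)"
  unfolding QA_def
proof
  fix x assume tT: "t \<in> T" and x: "x \<in> T - cone T t"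
  then have xT: "x \<in> T" and ntx: "\<not> t \<le> x" by (auto simp: cone_def)
  show "\<exists>a\<in>T. a \<le> x \<and> ms T a \<and> chev T a x \<subseteq> T - cone T t"
  proof (cases "x < t")
    case True
    obtain r where r: "r \<in> T" "r \<le> x" "minimal_in T r" using root[OF xT] by auto
    have "chev T r x \<subseteq> T - cone T t"
    proof
      fix w assume w: "w \<in> chev T r x"
      have "\<not> t \<le> w" if "w \<noteq> x"
      proof
        assume "t \<le> w"
        then have "x \<le> w" using True by simp
        then show False using w that unfolding chev_def cone_def by auto
      qed
      then show "w \<in> T - cone T t" using w ntx xT unfolding chev_def cone_def by auto
    qed
    then show ?thesis using r unfolding ms_def by blast
  next
    case False
    then have "\<not> x \<le> t" using ntx by (auto simp: order.order_iff_strict)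
    then obtain r where r: "r \<in> T" "r \<le> x" "\<not> r \<le> t" "ms T r" using sepr[OF xT tT] by auto
    have "chev T r x \<subseteq> T - cone T t"
    proof
      fix w assume w: "w \<in> chev T r x"
      show "w \<in> T - cone T t"
      proof (cases "w = x")
        case True then show ?thesis using x by auto
      next
        case False
        then have wT: "w \<in> T" "r \<le> w" using w unfolding chev_def cone_def by auto
        have "w \<notin> cone T t"
        proof
          assume "w \<in> cone T t"
          then have "t \<le> w" unfolding cone_def by auto
          then have "r \<le> t \<or> t \<le> r" using comp[OF wT(1) r(1) tT wT(2)] by auto
          then show False using r ntx order_trans[of t r x] by auto
        qed
        then show ?thesis using wT by auto
      qed
    qed
    then show ?thesis using r by blast
  qed
qed

lemma QB_cone: "t \<in> T \<Longrightarrow> QB (cone T t)"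
  unfolding QB_def
proof
  fix x assume "t \<in> T" "x \<in> cone T t"
  then have "bad T x (cone T t) = {}" unfolding bad_def isucc_def cone_def
    by (auto dest: order.strict_implies_order)
  then show "finite (bad T x (cone T t))" by simp
qed

lemma QB_compl: "t \<in> T \<Longrightarrow> QB (T - cone T t)"
  unfolding QB_def
proof
  fix x assume tT: "t \<in> T" and x: "x \<in> T - cone T t"
  then have xT: "x \<in> T" and ntx: "\<not> t \<le> x" by (auto simp: cone_def)
  have sub: "c \<le> t" if "c \<in> bad T x (T - cone T t)" for c
  proof -
    from that obtain w where c: "isucc T x c" and w: "w \<in> T" "c \<le> w" "t \<le> w"
      unfolding bad_def cone_def by auto
    have cT: "c \<in> T" "x < c" using c unfolding isucc_def by auto
    have "c \<le> t \<or> t \<le> c" using comp[OF w(1) cT(1) tT w(2) w(3)] .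
    moreover have "\<not> t < c"
    proof
      assume tc: "t < c"
      have "t \<le> x \<or> x \<le> t" using comp[OF cT(1) tT xT] tc cT by auto
      then show False using ntx c tT tc unfolding isucc_def by (auto simp: order.order_iff_strict)
    qed
    ultimately show ?thesis by (auto simp: order.order_iff_strict)
  qed
  show "finite (bad T x (T - cone T t))"
  proof (cases "bad T x (T - cone T t) = {}")
    case False
    then obtain c0 where c0: "c0 \<in> bad T x (T - cone T t)" by auto
    have "bad T x (T - cone T t) \<subseteq> {c0}"
    proof
      fix c assume c: "c \<in> bad T x (T - cone T t)"
      show "c \<in> {c0}" using isucc_uniq[of x c c0 t] sub[OF c] sub[OF c0] c c0 tT unfolding bad_def by auto
    qed
    then show ?thesis using finite_subset by blast
  qed simp
qed

lemma QA_single: "minimal_in T m \<Longrightarrow> QA {m}"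
  unfolding QA_def ms_def by (auto simp: chev_def cone_def minimal_in_def)

lemma QA_chev:
  assumes sT: "s \<in> T" and tT: "t \<in> T" and st: "s \<le> t" and mss: "ms T s"
  shows "QA (chev T s t)"
  unfolding QA_def
proof
  fix x assume x: "x \<in> chev T s t"
  show "\<exists>a\<in>T. a \<le> x \<and> ms T a \<and> chev T a x \<subseteq> chev T s t"
  proof (cases "x = t")
    case True then show ?thesis using sT st mss by blast
  next
    case False
    then have xT: "x \<in> T" "s \<le> x" "\<not> t \<le> x" using x unfolding chev_def cone_def by auto
    show ?thesis
    proof (cases "x < t")
      case True
      have "chev T s x \<subseteq> chev T s t"
      proof
        fix w assume w: "w \<in> chev T s x"
        have "\<not> t \<le> w" if "w \<noteq> x"
        proof
          assume "t \<le> w"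
          then have "x \<le> w" using True by simp
          then show False using w that unfolding chev_def cone_def by auto
        qed
        then show "w \<in> chev T s t" using w xT unfolding chev_def cone_def by auto
      qed
      then show ?thesis using sT xT mss by blast
    next
      case False
      then have "\<not> x \<le> t" using xT by (auto simp: order.order_iff_strict)
      then obtain r where r: "r \<in> T" "r \<le> x" "\<not> r \<le> t" "ms T r" using sepr[OF xT(1) tT] by auto
      have sr: "s \<le> r"
      proof -
        have "s \<le> r \<or> r \<le> s" using comp[OF xT(1) sT r(1) xT(2) r(2)] .
        then show ?thesis using r st order_trans[of r s t] by auto
      qed
      have "chev T r x \<subseteq> chev T s t"
      proof
        fix w assume w: "w \<in> chev T r x"
        show "w \<in> chev T s t"
        proof (cases "w = x")
          case True then show ?thesis using x by auto
        next
          case False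
          then have wT: "w \<in> T" "r \<le> w" using w unfolding chev_def cone_def by auto
          have "\<not> t \<le> w"
          proof
            assume "t \<le> w"
            then have "r \<le> t \<or> t \<le> r" using comp[OF wT(1) r(1) tT wT(2)] by auto
            then show False using r xT order_trans[of t r x] by auto
          qed
          then show ?thesis using wT sr order_trans[OF sr wT(2)] unfolding chev_def cone_def by auto
        qed
      qed
      then show ?thesis using r by blast
    qed
  qed
qed


lemma ms_T: "ms T t \<Longrightarrow> t \<in> T"
  unfolding ms_def minimal_in_def succ_level_def by auto

lemma open_coarse:
  assumes "openin (coarse_wedge T) U" shows "QA U \<and> QB U \<and> U \<subseteq> T"
proof -
  have g: "generate_topology_on ((\<lambda>t. cone T t) ` {t. minimal_in T t \<or> succ_level T t} \<union>
      (\<lambda>t. T - cone T t) ` {t. minimal_in T t \<or> succ_level T t}) U"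
    using assms unfolding coarse_wedge_def openin_topology_generated_by_iff .
  show ?thesis
  proof (rule gen_ind[OF g, where P="\<lambda>U. QA U \<and> QB U \<and> U \<subseteq> T"])
    show "QA {} \<and> QB {} \<and> {} \<subseteq> T" unfolding QA_def QB_def by auto
  next
    fix a b assume "QA a \<and> QB a \<and> a \<subseteq> T" "QA b \<and> QB b \<and> b \<subseteq> T"
    then show "QA (a \<inter> b) \<and> QB (a \<inter> b) \<and> a \<inter> b \<subseteq> T" using QA_Int QB_Int by auto
  next
    fix K assume "\<forall>k\<in>K. QA k \<and> QB k \<and> k \<subseteq> T"
    then show "QA (\<Union>K) \<and> QB (\<Union>K) \<and> \<Union>K \<subseteq> T" using QA_Un QB_Un by auto
  next
    fix s assume "s \<in> (\<lambda>t. cone T t) ` {t. minimal_in T t \<or> succ_level T t} \<union>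
      (\<lambda>t. T - cone T t) ` {t. minimal_in T t \<or> succ_level T t}"
    then obtain t where t: "ms T t" "s = cone T t \<or> s = T - cone T t" unfolding ms_def by auto
    have tT: "t \<in> T" using ms_T[OF t(1)] .
    show "QA s \<and> QB s \<and> s \<subseteq> T"
      using t QA_cone[OF t(1)] QB_cone[OF tT] QA_compl[OF tT] QB_compl[OF tT]
      unfolding cone_def by auto
  qed
qed

lemma open_fine:
  assumes "openin (fine_wedge T) U" shows "QB U \<and> U \<subseteq> T"
proof -
  have g: "generate_topology_on ((\<lambda>t. cone T t) ` T \<union> (\<lambda>t. T - cone T t) ` T) U"
    using assms unfolding fine_wedge_def openin_topology_generated_by_iff .
  show ?thesis
  proof (rule gen_ind[OF g, where P="\<lambda>U. QB U \<and> U \<subseteq> T"])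
    show "QB {} \<and> {} \<subseteq> T" unfolding QB_def by auto
  next
    fix a b assume "QB a \<and> a \<subseteq> T" "QB b \<and> b \<subseteq> T"
    then show "QB (a \<inter> b) \<and> a \<inter> b \<subseteq> T" using QB_Int by auto
  next
    fix K assume "\<forall>k\<in>K. QB k \<and> k \<subseteq> T"
    then show "QB (\<Union>K) \<and> \<Union>K \<subseteq> T" using QB_Un by auto
  next
    fix s assume "s \<in> (\<lambda>t. cone T t) ` T \<union> (\<lambda>t. T - cone T t) ` T"
    then obtain t where t: "t \<in> T" "s = cone T t \<or> s = T - cone T t" by auto
    show "QB s \<and> s \<subseteq> T"
      using t QB_cone[OF t(1)] QB_compl[OF t(1)] unfolding cone_def by auto
  qed
qed

lemma open_chev:
  assumes "openin (chevron_top T) U" shows "QA U \<and> U \<subseteq> T"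
proof -
  have g: "generate_topology_on ((\<lambda>m. {m}) ` {m. minimal_in T m} \<union>
      {chev T s t | s t. s \<in> T \<and> t \<in> T \<and> s \<le> t \<and> (minimal_in T s \<or> succ_level T s)}) U"
    using assms unfolding chevron_top_def openin_topology_generated_by_iff .
  show ?thesis
  proof (rule gen_ind[OF g, where P="\<lambda>U. QA U \<and> U \<subseteq> T"])
    show "QA {} \<and> {} \<subseteq> T" unfolding QA_def by auto
  next
    fix a b assume "QA a \<and> a \<subseteq> T" "QA b \<and> b \<subseteq> T"
    then show "QA (a \<inter> b) \<and> a \<inter> b \<subseteq> T" using QA_Int by auto
  next
    fix K assume "\<forall>k\<in>K. QA k \<and> k \<subseteq> T"
    then show "QA (\<Union>K) \<and> \<Union>K \<subseteq> T" using QA_Un by auto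
  next
    fix s assume "s \<in> (\<lambda>m. {m}) ` {m. minimal_in T m} \<union>
      {chev T s t | s t. s \<in> T \<and> t \<in> T \<and> s \<le> t \<and> (minimal_in T s \<or> succ_level T s)}"
    then consider m where "minimal_in T m" "s = {m}"
      | s0 t where "s0 \<in> T" "t \<in> T" "s0 \<le> t" "ms T s0" "s = chev T s0 t"
      unfolding ms_def by auto
    then show "QA s \<and> s \<subseteq> T"
    proof cases
      case 1 then show ?thesis using QA_single[OF 1(1)] unfolding minimal_in_def by auto
    next
      case 2 then show ?thesis using QA_chev[OF 2(1-4)] unfolding chev_def cone_def by auto
    qed
  qed
qed

definition GG :: "'a \<Rightarrow> 'a \<Rightarrow> 'a set \<Rightarrow> 'a set" where
  "GG a x U = chev T a x \<union> ups T x U"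

lemma GG_eq:
  assumes aT: "a \<in> T" and xT: "x \<in> T" and ax: "a \<le> x"
  shows "GG a x U = cone T a \<inter> \<Inter>((\<lambda>c. T - cone T c) ` bad T x U)"
proof
  show "GG a x U \<subseteq> cone T a \<inter> \<Inter>((\<lambda>c. T - cone T c) ` bad T x U)"
  proof
    fix w assume w: "w \<in> GG a x U"
    show "w \<in> cone T a \<inter> \<Inter>((\<lambda>c. T - cone T c) ` bad T x U)"
      using w unfolding GG_def
    proof
      assume wc: "w \<in> chev T a x"
      have wa: "w \<in> cone T a" using wc xT ax unfolding chev_def cone_def by auto
      have "w \<notin> cone T c" if "c \<in> bad T x U" for c
      proof
        assume "w \<in> cone T c"
        then have cw: "c \<le> w" unfolding cone_def by auto
        have xc: "x < c" using that unfolding bad_def isucc_def by auto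
        then have "x \<le> w" using cw by simp
        then have "w = x" using wc unfolding chev_def cone_def by auto
        then show False using cw xc by auto
      qed
      then show ?thesis using wa unfolding cone_def by auto
    next
      assume "w \<in> ups T x U"
      then obtain c' where c': "isucc T x c'" "cone T c' \<subseteq> U" "w \<in> cone T c'"
        unfolding ups_def by auto
      have wT: "w \<in> T" "c' \<le> w" using c' unfolding cone_def by auto
      have "a \<le> w" using ax c' wT unfolding isucc_def by auto
      then have wa: "w \<in> cone T a" using wT unfolding cone_def by auto
      have "w \<notin> cone T c" if "c \<in> bad T x U" for c
      proof
        assume "w \<in> cone T c"
        then have cw: "c \<le> w" unfolding cone_def by auto
        have "c = c'" using isucc_uniq[of x c c' w] that c'(1) cw wT unfolding bad_def by auto
        then show False using that c'(2) unfolding bad_def by auto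
      qed
      then show ?thesis using wa wT unfolding cone_def by auto
    qed
  qed
next
  show "cone T a \<inter> \<Inter>((\<lambda>c. T - cone T c) ` bad T x U) \<subseteq> GG a x U"
  proof
    fix w assume w: "w \<in> cone T a \<inter> \<Inter>((\<lambda>c. T - cone T c) ` bad T x U)"
    then have wT: "w \<in> T" "a \<le> w" unfolding cone_def by auto
    have nb: "w \<notin> cone T c" if "c \<in> bad T x U" for c
    proof -
      have "w \<in> T - cone T c" using w that by blast
      then show ?thesis by auto
    qed
    show "w \<in> GG a x U"
    proof (cases "x < w")
      case True
      obtain c where c: "isucc T x c" "c \<le> w" using isucc_ex[OF xT wT(1) True] by auto
      have wc: "w \<in> cone T c" using c wT unfolding cone_def by auto
      then have "c \<notin> bad T x U" using nb by auto
      then have "cone T c \<subseteq> U" using c unfolding bad_def by auto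
      then show ?thesis using wc c unfolding GG_def ups_def by blast
    next
      case False
      then have "w = x \<or> \<not> x \<le> w" by (auto simp: order.order_iff_strict)
      then show ?thesis using wT unfolding GG_def chev_def cone_def by auto
    qed
  qed
qed

lemma gen_Int_fin:
  assumes "finite F" "generate_topology_on S W" "\<forall>c\<in>F. generate_topology_on S (f c)"
  shows "generate_topology_on S (W \<inter> \<Inter>(f ` F))"
  using assms
proof (induction F rule: finite_induct)
  case empty then show ?case by simp
next
  case (insert c F)
  have e: "W \<inter> \<Inter>(f ` insert c F) = (W \<inter> \<Inter>(f ` F)) \<inter> f c" by auto
  have "generate_topology_on S (W \<inter> \<Inter>(f ` F))" using insert by auto
  moreover have "generate_topology_on S (f c)" using insert by auto
  ultimately show ?case unfolding e by (rule generate_topology_on.Int)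
qed

lemma GG_x: "x \<in> T \<Longrightarrow> a \<le> x \<Longrightarrow> x \<in> GG a x U"
  unfolding GG_def chev_def by auto

lemma GG_sub: "chev T a x \<subseteq> U \<Longrightarrow> GG a x U \<subseteq> U"
  unfolding GG_def ups_def by auto

lemma GG_facts:
  assumes "a \<le> x" "x \<in> T" "z \<in> GG a x U"
  shows "z \<in> T \<and> a \<le> z \<and> (z \<in> chev T a x \<or> (\<exists>c. isucc T x c \<and> c \<le> z \<and> cone T c \<subseteq> U))"
  using assms unfolding GG_def ups_def chev_def cone_def isucc_def
  by (auto dest: order.strict_implies_order intro: order.trans)

lemma sep:
  assumes xT: "x \<in> T" and yT: "y \<in> T" and aT: "a \<in> T" and bT: "b \<in> T"
    and ax: "a \<le> x" and "b \<le> y" and cU: "chev T a x \<subseteq> U" and cV: "chev T b y \<subseteq> V"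
    and zx: "z \<in> GG a x U" and zy: "z \<in> GG b y V" and ab: "a \<le> b"
    and xV: "x \<notin> V" and yU: "y \<notin> U"
  shows False
proof -
  have fx: "z \<in> T \<and> a \<le> z \<and> (z \<in> chev T a x \<or> (\<exists>c. isucc T x c \<and> c \<le> z \<and> cone T c \<subseteq> U))"
    using GG_facts[OF ax xT zx] .
  have fy: "z \<in> T \<and> b \<le> z" using GG_facts[OF \<open>b \<le> y\<close> yT zy] by auto
  have xU: "x \<in> U" using cU unfolding chev_def by auto
  have bV: "b \<in> V"
  proof -
    have "b \<in> chev T b y"
    proof (cases "y \<le> b")
      case True then have "b = y" using \<open>b \<le> y\<close> by auto
      then show ?thesis unfolding chev_def by auto
    next
      case False then show ?thesis using bT unfolding chev_def cone_def by auto
    qed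
    then show ?thesis using cV by auto
  qed
  show False
  proof (cases "x \<le> b")
    case False
    have "b \<in> chev T a x" using False bT ab unfolding chev_def cone_def by auto
    have ya: "a \<le> y" using ab \<open>b \<le> y\<close> by auto
    have xy: "x \<le> y"
    proof (rule ccontr)
      assume "\<not> x \<le> y"
      then have "y \<in> chev T a x" using yT ya unfolding chev_def cone_def by auto
      then show False using cU yU by auto
    qed
    have "x \<noteq> y" using xU yU by auto
    have "b \<le> x \<or> x \<le> b" using comp[OF yT bT xT \<open>b \<le> y\<close> xy] .
    then have "b \<le> x" using False by auto
    then have "x \<in> chev T b y" using xT xy \<open>x \<noteq> y\<close> unfolding chev_def cone_def by auto
    then show False using cV xV by auto
  next
    case True
    have "x \<noteq> b" using bV xV by auto
    then have xb: "x < b" using True by auto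
    then have xz: "x \<le> z" using fy by auto
    from fx show False
    proof (elim conjE disjE exE)
      assume "z \<in> chev T a x"
      then have "z = x" using xz unfolding chev_def cone_def by auto
      then show False using xb fy by auto
    next
      fix c assume c: "isucc T x c" "c \<le> z" "cone T c \<subseteq> U"
      have cT: "c \<in> T" using c unfolding isucc_def by auto
      have "c \<le> b \<or> b \<le> c" using comp[of z c b] fy cT bT c by auto
      moreover have "\<not> b < c" using c xb bT unfolding isucc_def by auto
      ultimately have "c \<le> b" by (auto simp: order.order_iff_strict)
      then have "y \<in> cone T c" using \<open>b \<le> y\<close> yT unfolding cone_def by auto
      then show False using c yU by auto
    qed
  qed
qed


lemma mn:
  assumes top: "topspace X = T" and t1: "t1_space X"
    and A: "\<And>x U. openin X U \<Longrightarrow> x \<in> U \<Longrightarrow>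
       A x U \<in> T \<and> A x U \<le> x \<and> chev T (A x U) x \<subseteq> U \<and> openin X (GG (A x U) x U)"
  shows "monotonically_normal X"
proof -
  have P1: "\<forall>x U. openin X U \<and> x \<in> U \<longrightarrow> openin X (GG (A x U) x U) \<and> x \<in> GG (A x U) x U \<and> GG (A x U) x U \<subseteq> U"
  proof (intro allI impI)
  fix x U assume h: "openin X U \<and> x \<in> U"
  then have UT: "U \<subseteq> T" using openin_subset top by metis
  have a: "A x U \<in> T \<and> A x U \<le> x \<and> chev T (A x U) x \<subseteq> U \<and> openin X (GG (A x U) x U)"
    using A h by auto
  show "openin X (GG (A x U) x U) \<and> x \<in> GG (A x U) x U \<and> GG (A x U) x U \<subseteq> U"
    using a GG_x[of x "A x U" U] GG_sub[of "A x U" x U] h UT by auto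
  qed
  have P2: "\<forall>x y U V. openin X U \<and> x \<in> U \<and> openin X V \<and> y \<in> V \<and> GG (A x U) x U \<inter> GG (A y V) y V \<noteq> {}
             \<longrightarrow> x \<in> V \<or> y \<in> U"
  proof (intro allI impI)
  fix x y U V
  assume h: "openin X U \<and> x \<in> U \<and> openin X V \<and> y \<in> V \<and> GG (A x U) x U \<inter> GG (A y V) y V \<noteq> {}"
  have UT: "U \<subseteq> T" "V \<subseteq> T" using openin_subset top h by metis+
  have xT: "x \<in> T" "y \<in> T" using h UT by auto
  have a: "A x U \<in> T \<and> A x U \<le> x \<and> chev T (A x U) x \<subseteq> U"
    using A h by auto
  have b: "A y V \<in> T \<and> A y V \<le> y \<and> chev T (A y V) y \<subseteq> V"
    using A h by auto
  obtain z where z: "z \<in> GG (A x U) x U" "z \<in> GG (A y V) y V" using h by auto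
  have fz: "z \<in> T" "A x U \<le> z" "A y V \<le> z"
    using GG_facts[of "A x U" x z U] GG_facts[of "A y V" y z V] a b xT z by auto
  show "x \<in> V \<or> y \<in> U"
  proof (rule ccontr)
    assume n: "\<not> (x \<in> V \<or> y \<in> U)"
    have "A x U \<le> A y V \<or> A y V \<le> A x U" using comp[of z "A x U" "A y V"] fz a b by auto
    then show False
    proof
      assume "A x U \<le> A y V"
      then show False using sep[of x y "A x U" "A y V" U V z] a b xT z n by auto
    next
      assume "A y V \<le> A x U"
      then show False using sep[of y x "A y V" "A x U" V U z] a b xT z n by auto
    qed
  qed
  qed
  show ?thesis unfolding monotonically_normal_def
    apply (rule conjI[OF t1])
    apply (rule exI[of _ "\<lambda>x U. GG (A x U) x U"])
    using P1 P2 by simp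
qed

lemma top_coarse: "topspace (coarse_wedge T) = T"
proof -
  have "\<Union>((\<lambda>t. cone T t) ` {t. minimal_in T t \<or> succ_level T t} \<union>
      (\<lambda>t. T - cone T t) ` {t. minimal_in T t \<or> succ_level T t}) = T"
  proof
    show "\<Union>((\<lambda>t. cone T t) ` {t. minimal_in T t \<or> succ_level T t} \<union>
      (\<lambda>t. T - cone T t) ` {t. minimal_in T t \<or> succ_level T t}) \<subseteq> T"
      unfolding cone_def by auto
  next
    show "T \<subseteq> \<Union>((\<lambda>t. cone T t) ` {t. minimal_in T t \<or> succ_level T t} \<union>
      (\<lambda>t. T - cone T t) ` {t. minimal_in T t \<or> succ_level T t})"
    proof
      fix x assume xT: "x \<in> T"
      obtain r where r: "r \<in> T" "r \<le> x" "minimal_in T r" using root[OF xT] by auto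
      then have "x \<in> cone T r" using xT unfolding cone_def by auto
      then show "x \<in> \<Union>((\<lambda>t. cone T t) ` {t. minimal_in T t \<or> succ_level T t} \<union>
      (\<lambda>t. T - cone T t) ` {t. minimal_in T t \<or> succ_level T t})" using r by blast
    qed
  qed
  then show ?thesis unfolding coarse_wedge_def by simp
qed

lemma top_fine: "topspace (fine_wedge T) = T"
proof -
  have "\<Union>((\<lambda>t. cone T t) ` T \<union> (\<lambda>t. T - cone T t) ` T) = T"
  proof
    show "\<Union>((\<lambda>t. cone T t) ` T \<union> (\<lambda>t. T - cone T t) ` T) \<subseteq> T" unfolding cone_def by auto
  next
    show "T \<subseteq> \<Union>((\<lambda>t. cone T t) ` T \<union> (\<lambda>t. T - cone T t) ` T)"
    proof
      fix x assume xT: "x \<in> T"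
      then have "x \<in> cone T x" unfolding cone_def by auto
      then show "x \<in> \<Union>((\<lambda>t. cone T t) ` T \<union> (\<lambda>t. T - cone T t) ` T)" using xT by blast
    qed
  qed
  then show ?thesis unfolding fine_wedge_def by simp
qed

lemma chev_basis:
  assumes "s \<in> T" "t \<in> T" "s \<le> t" "ms T s"
  shows "openin (chevron_top T) (chev T s t)"
  unfolding chevron_top_def
  by (rule topology_generated_by_Basis) (use assms in \<open>auto simp: ms_def\<close>)

lemma top_chev: "topspace (chevron_top T) = T"
proof -
  have "\<Union>((\<lambda>m. {m}) ` {m. minimal_in T m} \<union>
      {chev T s t | s t. s \<in> T \<and> t \<in> T \<and> s \<le> t \<and> (minimal_in T s \<or> succ_level T s)}) = T"
  proof
    show "\<Union>((\<lambda>m. {m}) ` {m. minimal_in T m} \<union>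
      {chev T s t | s t. s \<in> T \<and> t \<in> T \<and> s \<le> t \<and> (minimal_in T s \<or> succ_level T s)}) \<subseteq> T"
      unfolding chev_def cone_def minimal_in_def by auto
  next
    show "T \<subseteq> \<Union>((\<lambda>m. {m}) ` {m. minimal_in T m} \<union>
      {chev T s t | s t. s \<in> T \<and> t \<in> T \<and> s \<le> t \<and> (minimal_in T s \<or> succ_level T s)})"
    proof
      fix x assume xT: "x \<in> T"
      obtain r where r: "r \<in> T" "r \<le> x" "minimal_in T r" using root[OF xT] by auto
      have "x \<in> chev T r x" unfolding chev_def by auto
      moreover have "chev T r x \<in> {chev T s t | s t. s \<in> T \<and> t \<in> T \<and> s \<le> t \<and> (minimal_in T s \<or> succ_level T s)}"
        using r xT by blast
      ultimately show "x \<in> \<Union>((\<lambda>m. {m}) ` {m. minimal_in T m} \<union>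
      {chev T s t | s t. s \<in> T \<and> t \<in> T \<and> s \<le> t \<and> (minimal_in T s \<or> succ_level T s)})" by blast
    qed
  qed
  then show ?thesis unfolding chevron_top_def by simp
qed

lemma cone_open_coarse: "ms T t \<Longrightarrow> openin (coarse_wedge T) (cone T t)"
  unfolding coarse_wedge_def by (rule topology_generated_by_Basis) (auto simp: ms_def)

lemma compl_open_coarse: "ms T t \<Longrightarrow> openin (coarse_wedge T) (T - cone T t)"
  unfolding coarse_wedge_def by (rule topology_generated_by_Basis) (auto simp: ms_def)

lemma cone_open_fine: "t \<in> T \<Longrightarrow> openin (fine_wedge T) (cone T t)"
  unfolding fine_wedge_def by (rule topology_generated_by_Basis) auto

lemma compl_open_fine: "t \<in> T \<Longrightarrow> openin (fine_wedge T) (T - cone T t)"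
  unfolding fine_wedge_def by (rule topology_generated_by_Basis) auto

lemma t1_coarse: "t1_space (coarse_wedge T)"
  unfolding t1_space_def top_coarse
proof (intro ballI impI)
  fix x y assume xT: "x \<in> T" and yT: "y \<in> T" and xy: "x \<noteq> y"
  show "\<exists>U. openin (coarse_wedge T) U \<and> x \<in> U \<and> y \<notin> U"
  proof (cases "x \<le> y")
    case False
    then obtain r where r: "r \<in> T" "r \<le> x" "\<not> r \<le> y" "ms T r" using sepr[OF xT yT] by auto
    then show ?thesis using cone_open_coarse[OF r(4)] xT unfolding cone_def by auto
  next
    case True
    then have "x < y" using xy by auto
    then obtain c where c: "isucc T x c" "c \<le> y" using isucc_ex[OF xT yT] by auto
    have "ms T c" using isucc_succ[OF xT c(1)] unfolding ms_def by auto
    moreover have "x \<notin> cone T c" "y \<in> cone T c" using c yT unfolding cone_def isucc_def by auto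
    ultimately show ?thesis using compl_open_coarse[of c] xT by auto
  qed
qed

lemma t1_fine: "t1_space (fine_wedge T)"
  unfolding t1_space_def top_fine
proof (intro ballI impI)
  fix x y assume xT: "x \<in> T" and yT: "y \<in> T" and xy: "x \<noteq> y"
  show "\<exists>U. openin (fine_wedge T) U \<and> x \<in> U \<and> y \<notin> U"
  proof (cases "x \<le> y")
    case False
    then show ?thesis using cone_open_fine[OF xT] xT unfolding cone_def by auto
  next
    case True
    then have "x \<notin> cone T y" using xy unfolding cone_def by auto
    then show ?thesis using compl_open_fine[OF yT] xT unfolding cone_def by auto
  qed
qed

lemma t1_chev: "t1_space (chevron_top T)"
  unfolding t1_space_def top_chev
proof (intro ballI impI)
  fix x y assume xT: "x \<in> T" and yT: "y \<in> T" and xy: "x \<noteq> y"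
  show "\<exists>U. openin (chevron_top T) U \<and> x \<in> U \<and> y \<notin> U"
  proof (cases "x \<le> y")
    case False
    then obtain r where r: "r \<in> T" "r \<le> x" "\<not> r \<le> y" "ms T r" using sepr[OF xT yT] by auto
    have "x \<in> chev T r x" "y \<notin> chev T r x" using r xy unfolding chev_def cone_def by auto
    then show ?thesis using chev_basis[OF r(1) xT r(2) r(4)] by auto
  next
    case True
    obtain r where r: "r \<in> T" "r \<le> x" "minimal_in T r" using root[OF xT] by auto
    have "x \<in> chev T r x" "y \<notin> chev T r x" using True xy unfolding chev_def cone_def by auto
    then show ?thesis using chev_basis[OF r(1) xT r(2)] r(3) unfolding ms_def by auto
  qed
qed


definition Asel :: "'a \<Rightarrow> 'a set \<Rightarrow> 'a" where
  "Asel x U = (SOME a. a \<in> T \<and> a \<le> x \<and> ms T a \<and> chev T a x \<subseteq> U)"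

lemma Asel: assumes "QA U" "x \<in> U"
  shows "Asel x U \<in> T \<and> Asel x U \<le> x \<and> ms T (Asel x U) \<and> chev T (Asel x U) x \<subseteq> U"
proof -
  have "\<exists>a. a \<in> T \<and> a \<le> x \<and> ms T a \<and> chev T a x \<subseteq> U" using assms unfolding QA_def by blast
  then show ?thesis unfolding Asel_def by (rule someI_ex)
qed

lemma mn_coarse: "monotonically_normal (coarse_wedge T)"
proof (rule mn[OF top_coarse t1_coarse, of Asel])
  fix x U assume U: "openin (coarse_wedge T) U" and x: "x \<in> U"
  have q: "QA U" "QB U" "U \<subseteq> T" using open_coarse[OF U] by auto
  have a: "Asel x U \<in> T \<and> Asel x U \<le> x \<and> ms T (Asel x U) \<and> chev T (Asel x U) x \<subseteq> U"
    using Asel[OF q(1) x] .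
  have xT: "x \<in> T" using q x by auto
  have eq: "GG (Asel x U) x U = cone T (Asel x U) \<inter> \<Inter>((\<lambda>c. T - cone T c) ` bad T x U)"
    using GG_eq[of "Asel x U" x U] a xT by auto
  have fin: "finite (bad T x U)" using q x unfolding QB_def by auto
  have "generate_topology_on ((\<lambda>t. cone T t) ` {t. minimal_in T t \<or> succ_level T t} \<union>
      (\<lambda>t. T - cone T t) ` {t. minimal_in T t \<or> succ_level T t})
      (cone T (Asel x U) \<inter> \<Inter>((\<lambda>c. T - cone T c) ` bad T x U))"
  proof (rule gen_Int_fin[OF fin])
    show "generate_topology_on ((\<lambda>t. cone T t) ` {t. minimal_in T t \<or> succ_level T t} \<union>
      (\<lambda>t. T - cone T t) ` {t. minimal_in T t \<or> succ_level T t}) (cone T (Asel x U))"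
      using a unfolding ms_def by (intro generate_topology_on.Basis) auto
    show "\<forall>c\<in>bad T x U. generate_topology_on ((\<lambda>t. cone T t) ` {t. minimal_in T t \<or> succ_level T t} \<union>
      (\<lambda>t. T - cone T t) ` {t. minimal_in T t \<or> succ_level T t}) (T - cone T c)"
    proof
      fix c assume "c \<in> bad T x U"
      then have "succ_level T c" using isucc_succ[OF xT] unfolding bad_def by auto
      then show "generate_topology_on ((\<lambda>t. cone T t) ` {t. minimal_in T t \<or> succ_level T t} \<union>
      (\<lambda>t. T - cone T t) ` {t. minimal_in T t \<or> succ_level T t}) (T - cone T c)"
        by (intro generate_topology_on.Basis) auto
    qed
  qed
  then have "openin (coarse_wedge T) (GG (Asel x U) x U)"
    unfolding eq coarse_wedge_def openin_topology_generated_by_iff .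
  then show "Asel x U \<in> T \<and> Asel x U \<le> x \<and> chev T (Asel x U) x \<subseteq> U \<and>
      openin (coarse_wedge T) (GG (Asel x U) x U)" using a by auto
qed

lemma mn_fine: "monotonically_normal (fine_wedge T)"
proof (rule mn[OF top_fine t1_fine, of "\<lambda>x U. x"])
  fix x U assume U: "openin (fine_wedge T) U" and x: "x \<in> U"
  have q: "QB U" "U \<subseteq> T" using open_fine[OF U] by auto
  have xT: "x \<in> T" using q x by auto
  have cx: "chev T x x \<subseteq> U" using x unfolding chev_def by auto
  have eq: "GG x x U = cone T x \<inter> \<Inter>((\<lambda>c. T - cone T c) ` bad T x U)"
    using GG_eq[of x x U] xT by auto
  have fin: "finite (bad T x U)" using q x unfolding QB_def by auto
  have "generate_topology_on ((\<lambda>t. cone T t) ` T \<union> (\<lambda>t. T - cone T t) ` T)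
      (cone T x \<inter> \<Inter>((\<lambda>c. T - cone T c) ` bad T x U))"
  proof (rule gen_Int_fin[OF fin])
    show "generate_topology_on ((\<lambda>t. cone T t) ` T \<union> (\<lambda>t. T - cone T t) ` T) (cone T x)"
      using xT by (intro generate_topology_on.Basis) auto
    show "\<forall>c\<in>bad T x U. generate_topology_on ((\<lambda>t. cone T t) ` T \<union> (\<lambda>t. T - cone T t) ` T) (T - cone T c)"
    proof
      fix c assume "c \<in> bad T x U"
      then have "c \<in> T" unfolding bad_def isucc_def by auto
      then show "generate_topology_on ((\<lambda>t. cone T t) ` T \<union> (\<lambda>t. T - cone T t) ` T) (T - cone T c)"
        by (intro generate_topology_on.Basis) auto
    qed
  qed
  then have "openin (fine_wedge T) (GG x x U)"
    unfolding eq fine_wedge_def openin_topology_generated_by_iff .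
  then show "x \<in> T \<and> x \<le> x \<and> chev T x x \<subseteq> U \<and> openin (fine_wedge T) (GG x x U)"
    using xT cx by auto
qed

lemma cone_open_chev: assumes "ms T c" shows "openin (chevron_top T) (cone T c)"
proof -
  have cT: "c \<in> T" using ms_T[OF assms] .
  have eq: "cone T c = \<Union>((\<lambda>w. chev T c w) ` cone T c)"
    unfolding chev_def cone_def by auto
  show ?thesis
    by (subst eq, rule openin_Union) (use chev_basis cT assms in \<open>auto simp: cone_def\<close>)
qed

lemma mn_chev: "monotonically_normal (chevron_top T)"
proof (rule mn[OF top_chev t1_chev, of Asel])
  fix x U assume U: "openin (chevron_top T) U" and x: "x \<in> U"
  have q: "QA U" "U \<subseteq> T" using open_chev[OF U] by auto
  have a: "Asel x U \<in> T \<and> Asel x U \<le> x \<and> ms T (Asel x U) \<and> chev T (Asel x U) x \<subseteq> U"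
    using Asel[OF q(1) x] .
  have xT: "x \<in> T" using q x by auto
  have o1: "openin (chevron_top T) (chev T (Asel x U) x)" using chev_basis a xT by auto
  have o2: "openin (chevron_top T) (ups T x U)" unfolding ups_def
  proof (rule openin_Union)
    fix S assume "S \<in> {cone T c |c. isucc T x c \<and> cone T c \<subseteq> U}"
    then obtain c where "S = cone T c" "isucc T x c" by auto
    then show "openin (chevron_top T) S" using cone_open_chev isucc_succ[OF xT] unfolding ms_def by auto
  qed
  have "openin (chevron_top T) (GG (Asel x U) x U)" unfolding GG_def using o1 o2 by (rule openin_Un)
  then show "Asel x U \<in> T \<and> Asel x U \<le> x \<and> chev T (Asel x U) x \<subseteq> U \<and>
      openin (chevron_top T) (GG (Asel x U) x U)" using a by auto
qed

end


theorem theorem4p2: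
  fixes T :: "'a::order set"
  assumes tree: "is_tree T"
    and standing: "\<And>C. is_chain T C \<Longrightarrow> C \<noteq> {} \<Longrightarrow> upper_bounds T C \<noteq> {} \<Longrightarrow>
                     \<exists>t. pseudo_sup T C = {t}"
    and psup: "\<And>C t. nontrivial_chain T C \<Longrightarrow> t \<in> pseudo_sup T C \<Longrightarrow> is_supremum T C t"
  shows "monotonically_normal (coarse_wedge T) \<and> monotonically_normal (fine_wedge T)
         \<and> monotonically_normal (chevron_top T)"
proof -
  interpret stree T
    by unfold_locales (use tree standing psup in auto)
  show ?thesis using mn_coarse mn_fine mn_chev by auto
qed

end
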